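(* Let $G$ be a $P_5$-free graph. If $(a,b,c,d)$ is an induced path $P_4$ in $G$ (with edges $ab,bc,cd$), then neither $b$ nor $c$ belongs to any efficient dominating set of $G$.
   Context: All graphs are finite, undirected and simple. A vertex dominates itself and all its neighbors. A vertex set $D$ of $G$ is an efficient dominating set if every vertex of $G$ is dominated by exactly one vertex of $D$. $P_k$ denotes the chordless path on $k$ vertices; $P_5$-free means no induced subgraph isomorphic to $P_5$. *)

theory Defs
  imports Main
begin

definition graph :: "'a set \<Rightarrow> ('a \<Rightarrow> 'a \<Rightarrow> bool) \<Rightarrow> bool" where
  "graph V E \<longleftrightarrow> finite V \<and> (\<forall>x y. E x y \<longrightarrow> E y x) \<and> (\<forall>x. \<not> E x x)
     \<and> (\<forall>x y. E x y \<longrightarrow> x \<in> V \<and> y \<in> V)"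

definition dominates :: "('a \<Rightarrow> 'a \<Rightarrow> bool) \<Rightarrow> 'a \<Rightarrow> 'a \<Rightarrow> bool" where
  "dominates E d v \<longleftrightarrow> d = v \<or> E d v"

definition efficient_dominating_set ::
  "'a set \<Rightarrow> ('a \<Rightarrow> 'a \<Rightarrow> bool) \<Rightarrow> 'a set \<Rightarrow> bool" where
  "efficient_dominating_set V E D \<longleftrightarrow> D \<subseteq> V \<and>
     (\<forall>v\<in>V. \<exists>!d. d \<in> D \<and> dominates E d v)"

definition induced_path :: "'a set \<Rightarrow> ('a \<Rightarrow> 'a \<Rightarrow> bool) \<Rightarrow> 'a list \<Rightarrow> bool" where
  "induced_path V E ps \<longleftrightarrow> distinct ps \<and> set ps \<subseteq> V \<and>
     (\<forall>i<length ps. \<forall>j<length ps. E (ps ! i) (ps ! j) \<longleftrightarrow> (i = j + 1 \<or> j = i + 1))"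

definition P5_free :: "'a set \<Rightarrow> ('a \<Rightarrow> 'a \<Rightarrow> bool) \<Rightarrow> bool" where
  "P5_free V E \<longleftrightarrow> \<not> (\<exists>ps. length ps = 5 \<and> induced_path V E ps)"

end

theory Submission
  imports Defs
begin

lemma ip4:
  assumes "induced_path V E [a, b, c, d]"
  shows "distinct [a,b,c,d] \<and> {a,b,c,d} \<subseteq> V \<and> E a b \<and> E b c \<and> E c d \<and> E b a \<and> E c b \<and> E d c
    \<and> \<not> E a c \<and> \<not> E c a \<and> \<not> E a d \<and> \<not> E d a \<and> \<not> E b d \<and> \<not> E d b"
proof -
  have h: "\<forall>i<4. \<forall>j<4. E ([a,b,c,d] ! i) ([a,b,c,d] ! j) \<longleftrightarrow> (i = j + 1 \<or> j = i + 1)"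
    and "distinct [a,b,c,d]" "set [a,b,c,d] \<subseteq> V"
    using assms unfolding induced_path_def by auto
  have e: "\<And>i j. i<4 \<Longrightarrow> j<4 \<Longrightarrow> E ([a,b,c,d] ! i) ([a,b,c,d] ! j) \<longleftrightarrow> (i = j + 1 \<or> j = i + 1)"
    using h by blast
  show ?thesis using `distinct _` `set _ \<subseteq> V`
      e[of 0 1] e[of 1 2] e[of 2 3] e[of 1 0] e[of 2 1] e[of 3 2]
      e[of 0 2] e[of 2 0] e[of 0 3] e[of 3 0] e[of 1 3] e[of 3 1] by simp
qed

lemma ip5:
  assumes "distinct [a,b,c,d,x]" "set [a,b,c,d,x] \<subseteq> V"
    and "graph V E"
    and "E a b" "E b c" "E c d" "E d x"
    and "\<not> E a c" "\<not> E a d" "\<not> E a x" "\<not> E b d" "\<not> E b x" "\<not> E c x"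
  shows "induced_path V E [a,b,c,d,x]"
proof -
  have sym: "\<And>u v. E u v \<Longrightarrow> E v u" and irr: "\<And>u. \<not> E u u"
    using assms(3) unfolding graph_def by auto
  have nsym: "\<And>u v. \<not> E u v \<Longrightarrow> \<not> E v u" using sym by blast
  show ?thesis unfolding induced_path_def
  proof (intro conjI allI impI)
    fix i j assume "i < length [a,b,c,d,x]" "j < length [a,b,c,d,x]"
    then have i: "i = 0 \<or> i = 1 \<or> i = 2 \<or> i = 3 \<or> i = 4"
      and j: "j = 0 \<or> j = 1 \<or> j = 2 \<or> j = 3 \<or> j = 4" by auto
    have ne: "E b a" "E c b" "E d c" "E x d"
      using sym assms(4-7) by blast+
    have nn: "\<not> E c a" "\<not> E d a" "\<not> E x a" "\<not> E d b" "\<not> E x b" "\<not> E x c"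
      using nsym assms(8-) by blast+
    from i j show "E ([a,b,c,d,x] ! i) ([a,b,c,d,x] ! j) = (i = j + 1 \<or> j = i + 1)"
      using assms(4-) nn ne irr by (elim disjE; simp)
  qed (use assms in auto)
qed

lemma main:
  assumes "graph V E" "P5_free V E"
    and "distinct [a,b,c,d]" "{a,b,c,d} \<subseteq> V"
    and "E a b" "E b c" "E c d" "\<not> E a c" "\<not> E a d" "\<not> E b d"
    and D: "efficient_dominating_set V E D"
  shows "b \<notin> D"
proof
  assume bD: "b \<in> D"
  have sym: "\<And>u v. E u v \<Longrightarrow> E v u" and GV: "\<And>u v. E u v \<Longrightarrow> u \<in> V \<and> v \<in> V"
    using assms(1) unfolding graph_def by auto
  have DV: "D \<subseteq> V" and U: "\<And>v. v \<in> V \<Longrightarrow> \<exists>!x. x \<in> D \<and> dominates E x v"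
    using D unfolding efficient_dominating_set_def by auto
  have uniq: "\<And>v x y. v \<in> V \<Longrightarrow> x \<in> D \<Longrightarrow> dominates E x v \<Longrightarrow> y \<in> D \<Longrightarrow> dominates E y v \<Longrightarrow> x = y"
    using U by blast
  obtain x where xD: "x \<in> D" and xd: "dominates E x d" using U[of d] assms(4) by auto
  have cV: "c \<in> V" "a \<in> V" "d \<in> V" using assms(4) by auto
  have cnD: "c \<notin> D" using uniq[of c b c] bD assms(3,6) cV unfolding dominates_def by auto
  have "x \<noteq> d"
  proof
    assume "x = d"
    then show False using uniq[of c b d] bD xD assms(3,6,7) cV sym unfolding dominates_def by force
  qed
  then have Edx: "E d x" using xd sym unfolding dominates_def by auto
  have xV: "x \<in> V" using DV xD by auto
  have "x \<noteq> b" using Edx assms(10) sym by blast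
  have "x \<noteq> c" using cnD xD by blast
  have "x \<noteq> a" using Edx assms(9) sym by blast
  have nbx: "\<not> E b x" using uniq[of x b x] bD xD xV `x \<noteq> b` unfolding dominates_def by auto
  have ncx: "\<not> E c x" using uniq[of c b x] bD xD cV `x \<noteq> b` assms(6) sym unfolding dominates_def by auto
  have nax: "\<not> E a x" using uniq[of a b x] bD xD cV `x \<noteq> b` assms(5) sym unfolding dominates_def by auto
  have "induced_path V E [a,b,c,d,x]"
    using ip5[of a b c d x V E] assms `x \<noteq> a` `x \<noteq> b` `x \<noteq> c` `x \<noteq> d` xV Edx nbx ncx nax
    by auto
  then show False using assms(2) unfolding P5_free_def by force
qed

theorem proposition1:
  fixes V :: "'a set" and E :: "'a \<Rightarrow> 'a \<Rightarrow> bool" and a b c d :: 'a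
  assumes "graph V E"
    and "P5_free V E"
    and "induced_path V E [a, b, c, d]"
    and "efficient_dominating_set V E D"
  shows "b \<notin> D \<and> c \<notin> D"
proof -
  note p = ip4[OF assms(3)]
  have "b \<notin> D" using main[OF assms(1,2) _ _ _ _ _ _ _ _ assms(4), of a b c d] p by auto
  moreover have "c \<notin> D" using main[OF assms(1,2) _ _ _ _ _ _ _ _ assms(4), of d c b a] p by auto
  ultimately show ?thesis by blast
qed

end
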